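(* Let $n\in\{2,3\}$, let $\Gamma\subset\Gamma_\infty$ be a nonempty bounded relatively open set, let $0\neq\phi\in\mathscr{D}(\Gamma)$ be fixed (independent of $k$), and let $s\in\mathbb{R}$. Then for every constant $C<1/(2\sqrt2)$ there exists $k_0>0$ such that for all $k\ge k_0$, $$\|T_k\phi\|_{H^{s-1}_k(\Gamma)}\ge C\|\phi\|_{\tilde H^s_k(\Gamma)}.$$
   Context: $\Gamma_\infty:=\{\mathbf{x}\in\mathbb{R}^n:x_n=0\}$ is identified with $\mathbb{R}^{n-1}$; $\mathscr{D}(\Gamma)=C_0^\infty(\Gamma)$. Fourier transform: $\hat u(\boldsymbol{\xi})=(2\pi)^{-(n-1)/2}\int e^{-{\mathrm{i}}\boldsymbol{\xi}\cdot\mathbf{x}}u(\mathbf{x})\,\mathrm{d}\mathbf{x}$. $\|u\|_{H^s_k(\mathbb{R}^{n-1})}^2=\int(k^2+|\boldsymbol{\xi}|^2)^s|\hat u|^2\,\mathrm{d}\boldsymbol{\xi}$; $H^s(\Gamma)$ = restrictions to $\Gamma$ of $H^s(\mathbb{R}^{n-1})$ with the infimum-over-extensions norm $\|\cdot\|_{H^s_k(\Gamma)}$; $\tilde H^s(\Gamma)$ = closure of $\mathscr{D}(\Gamma)$ in $H^s(\mathbb{R}^{n-1})$ with norm $\|\cdot\|_{H^s_k(\mathbb{R}^{n-1})}$. $T_k\phi=(T_k^\infty\phi)|_\Gamma$ with $\widehat{T_k^\infty\phi}(\boldsymbol{\xi})=\frac{{\mathrm{i}}}{2}Z(\boldsymbol{\xi})\hat\phi(\boldsymbol{\xi})$,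 $Z(\boldsymbol{\xi})=\sqrt{k^2-|\boldsymbol{\xi}|^2}$ for $|\boldsymbol{\xi}|\le k$ and ${\mathrm{i}}\sqrt{|\boldsymbol{\xi}|^2-k^2}$ for $|\boldsymbol{\xi}|>k$ (the acoustic hypersingular operator on the planar screen $\Gamma$). *)

theory Defs
  imports "HOL-Analysis.Analysis"
begin

text \<open>The hyperplane Gamma_infinity is identified with the Euclidean space 'a, of dimension n-1.\<close>

coinductive smooth_fun :: "('a::euclidean_space \<Rightarrow> complex) \<Rightarrow> bool" where
  "(\<And>x. f differentiable (at x)) \<Longrightarrow>
   (\<And>i. i \<in> Basis \<Longrightarrow> smooth_fun (\<lambda>x. frechet_derivative f (at x) i)) \<Longrightarrow>
   smooth_fun f"

definition tsupp :: "('a::euclidean_space \<Rightarrow> complex) \<Rightarrow> 'a set" where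
  "tsupp f = closure {x. f x \<noteq> 0}"

definition test_fun :: "'a::euclidean_space set \<Rightarrow> ('a \<Rightarrow> complex) set" where
  "test_fun G = {f. smooth_fun f \<and> compact (tsupp f) \<and> tsupp f \<subseteq> G}"

definition fourier :: "('a::euclidean_space \<Rightarrow> complex) \<Rightarrow> 'a \<Rightarrow> complex" where
  "fourier u \<xi> = complex_of_real ((2 * pi) powr (- real DIM('a) / 2)) *
      (LINT x|lborel. cis (- (\<xi> \<bullet> x)) * u x)"

definition sob_weight :: "real \<Rightarrow> real \<Rightarrow> 'a::euclidean_space \<Rightarrow> real" where
  "sob_weight k s \<xi> = (k\<^sup>2 + (norm \<xi>)\<^sup>2) powr s"

text \<open>H^s_k(R^(n-1)) norm of the distribution whose Fourier transform is U.\<close>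
definition sob_norm_ft :: "real \<Rightarrow> real \<Rightarrow> ('a::euclidean_space \<Rightarrow> complex) \<Rightarrow> real" where
  "sob_norm_ft k s U = sqrt (LINT \<xi>|lborel. sob_weight k s \<xi> * (cmod (U \<xi>))\<^sup>2)"

definition in_sob_ft :: "real \<Rightarrow> real \<Rightarrow> ('a::euclidean_space \<Rightarrow> complex) \<Rightarrow> bool" where
  "in_sob_ft k s U \<longleftrightarrow> U \<in> borel_measurable lborel \<and>
      integrable lborel (\<lambda>\<xi>. sob_weight k s \<xi> * (cmod (U \<xi>))\<^sup>2)"

text \<open>The distributions with Fourier transforms U and V have the same restriction to G:
  the pairings with every test function psi in D(G) agree, where
  the pairing of u and psi equals the integral of (hat u)(xi) (hat psi)(-xi).\<close>
definition same_restr :: "'a::euclidean_space set \<Rightarrow> ('a \<Rightarrow> complex) \<Rightarrow> ('a \<Rightarrow> complex) \<Rightarrow> bool" where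
  "same_restr G U V \<longleftrightarrow> (\<forall>\<psi>\<in>test_fun G.
      (LINT \<xi>|lborel. U \<xi> * fourier \<psi> (- \<xi>)) = (LINT \<xi>|lborel. V \<xi> * fourier \<psi> (- \<xi>)))"

text \<open>H^s_k(G) norm of the restriction to G of the distribution with Fourier transform V:
  infimum over all extensions in H^s(R^(n-1)).\<close>
definition sob_norm_restr :: "real \<Rightarrow> real \<Rightarrow> 'a::euclidean_space set \<Rightarrow> ('a \<Rightarrow> complex) \<Rightarrow> real" where
  "sob_norm_restr k s G V = Inf {sob_norm_ft k s U | U. in_sob_ft k s U \<and> same_restr G U V}"

definition Zsym :: "real \<Rightarrow> 'a::euclidean_space \<Rightarrow> complex" where
  "Zsym k \<xi> = (if norm \<xi> \<le> k then complex_of_real (sqrt (k\<^sup>2 - (norm \<xi>)\<^sup>2))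
               else \<i> * complex_of_real (sqrt ((norm \<xi>)\<^sup>2 - k\<^sup>2)))"

definition Tk_ft :: "real \<Rightarrow> ('a::euclidean_space \<Rightarrow> complex) \<Rightarrow> 'a \<Rightarrow> complex" where
  "Tk_ft k \<phi> \<xi> = (\<i> / 2) * Zsym k \<xi> * fourier \<phi> \<xi>"

end

theory Submission
  imports Defs "HOL-Probability.Sinc_Integral"
begin

definition Dd :: "('a::euclidean_space \<Rightarrow> complex) \<Rightarrow> 'a \<Rightarrow> 'a \<Rightarrow> complex" where
  "Dd f j = (\<lambda>x. frechet_derivative f (at x) j)"

lemma smooth_diff: "smooth_fun f \<Longrightarrow> f differentiable (at x)"
  by (erule smooth_fun.cases) auto

lemma smooth_Dd: "smooth_fun f \<Longrightarrow> j \<in> Basis \<Longrightarrow> smooth_fun (Dd f j)"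
  unfolding Dd_def by (erule smooth_fun.cases) auto

lemma smooth_cont: "smooth_fun f \<Longrightarrow> continuous_on S f"
  apply (rule differentiable_imp_continuous_on)
  apply (rule differentiable_at_imp_differentiable_on)
  apply (erule smooth_diff)
  done

lemma tsupp_zero: "x \<notin> tsupp f \<Longrightarrow> f x = 0"
  unfolding tsupp_def using closure_subset[of "{x. f x \<noteq> 0}"] by auto

lemma tsupp_Dd: "tsupp (Dd f j) \<subseteq> tsupp f"
proof -
  have "{x. Dd f j x \<noteq> 0} \<subseteq> tsupp f"
  proof
    fix x assume x: "x \<in> {x. Dd f j x \<noteq> 0}"
    show "x \<in> tsupp f"
    proof (rule ccontr)
      assume nx: "x \<notin> tsupp f"
      have op: "open (- tsupp f)" unfolding tsupp_def by auto
      have "((\<lambda>_. 0) has_derivative (\<lambda>_. 0)) (at x)" by simp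
      then have "(f has_derivative (\<lambda>_. 0)) (at x)"
        by (rule has_derivative_transform_within_open[OF _ op]) (use nx tsupp_zero in auto)
      then have "(\<lambda>_. 0) = frechet_derivative f (at x)"
        by (rule frechet_derivative_at)
      note eq = this
      have "frechet_derivative f (at x) j = 0" using fun_cong[OF eq, of j] by simp
      with x show False by (simp add: Dd_def)
    qed
  qed
  then show ?thesis unfolding tsupp_def
    by (simp add: closure_minimal)
qed

lemma test_Dd: "f \<in> test_fun G \<Longrightarrow> j \<in> Basis \<Longrightarrow> Dd f j \<in> test_fun G"
proof -
  assume f: "f \<in> test_fun G" and j: "j \<in> Basis"
  have "closed (tsupp (Dd f j))" unfolding tsupp_def by simp
  moreover have "compact (tsupp f)" using f unfolding test_fun_def by simp
  ultimately have "compact (tsupp (Dd f j))"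
    using tsupp_Dd[of f j] unfolding compact_eq_bounded_closed by (blast intro: bounded_subset)
  moreover have "smooth_fun (Dd f j)" using f j smooth_Dd[of f j] unfolding test_fun_def by blast
  moreover have "tsupp (Dd f j) \<subseteq> G" using f tsupp_Dd[of f j] unfolding test_fun_def by blast
  ultimately show ?thesis unfolding test_fun_def by blast
qed

lemma test_props:
  assumes "f \<in> test_fun G"
  shows "smooth_fun f" "compact (tsupp f)" "\<And>x. x \<notin> tsupp f \<Longrightarrow> f x = 0"
  using assms tsupp_zero unfolding test_fun_def by auto

lemma test_integrable:
  assumes "f \<in> test_fun G"
  shows "integrable lborel f"
proof -
  have "integrable lborel (\<lambda>x. indicator (tsupp f) x *\<^sub>R f x)"
    using test_props[OF assms] smooth_cont by (intro borel_integrable_compact) auto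
  moreover have "(\<lambda>x. indicator (tsupp f) x *\<^sub>R f x) = f"
    using test_props(3)[OF assms] by (auto simp: indicator_def)
  ultimately show ?thesis by simp
qed

lemma test_meas: "f \<in> test_fun G \<Longrightarrow> f \<in> borel_measurable borel"
  using test_props(1) smooth_cont by (intro borel_measurable_continuous_onI) auto

lemma test_bounded:
  assumes "f \<in> test_fun G"
  shows "\<exists>B. \<forall>x. norm (f x) \<le> B"
proof -
  have "compact (f ` tsupp f)"
    using test_props[OF assms] smooth_cont by (intro compact_continuous_image) auto
  then obtain B where B: "\<And>y. y \<in> f ` tsupp f \<Longrightarrow> norm y \<le> B"
    using compact_imp_bounded bounded_iff by metis
  have "norm (f x) \<le> max B 0" for x
    using B[of "f x"] test_props(3)[OF assms, of x] by (cases "x \<in> tsupp f") auto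
  then show ?thesis by blast
qed

lemma meas_cis: "(\<lambda>x::'a::euclidean_space. cis (- (\<xi> \<bullet> x))) \<in> borel_measurable borel"
  by (intro borel_measurable_continuous_onI continuous_intros)

lemma meas_cis_mult:
  fixes f :: "'a::euclidean_space \<Rightarrow> complex"
  assumes "f \<in> borel_measurable borel"
  shows "(\<lambda>x. cis (- (\<xi> \<bullet> x)) * f x) \<in> borel_measurable borel"
  using meas_cis assms by (rule borel_measurable_times)

lemma integrable_cis_mult:
  fixes f :: "'a::euclidean_space \<Rightarrow> complex"
  assumes "integrable lborel f"
  shows "integrable lborel (\<lambda>x. cis (- (\<xi> \<bullet> x)) * f x)"
proof (rule Bochner_Integration.integrable_bound[OF assms])
  show "(\<lambda>x. cis (- (\<xi> \<bullet> x)) * f x) \<in> borel_measurable lborel"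
    using meas_cis_mult[of f \<xi>] assms by simp
qed (simp add: norm_mult)

lemma lborel_translate:
  fixes g :: "'a::euclidean_space \<Rightarrow> 'b::{banach,second_countable_topology}"
  assumes g: "g \<in> borel_measurable borel"
  shows "integral\<^sup>L lborel (\<lambda>x. g (c + x)) = integral\<^sup>L lborel g"
    and "integrable lborel (\<lambda>x. g (c + x)) = integrable lborel g"
proof -
  have m: "(+) c \<in> borel_measurable lborel"
    unfolding measurable_lborel2 by (intro borel_measurable_continuous_onI continuous_intros)
  have "integral\<^sup>L lborel g = integral\<^sup>L (distr lborel borel ((+) c)) g" by (simp add: lborel_distr_plus)
  also have "\<dots> = integral\<^sup>L lborel (\<lambda>x. g (c+x))" by (rule integral_distr[OF m g])
  finally show "integral\<^sup>L lborel (\<lambda>x. g (c + x)) = integral\<^sup>L lborel g" by simp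
  have "integrable lborel g = integrable (distr lborel borel ((+) c)) g" by (simp add: lborel_distr_plus)
  also have "\<dots> = integrable lborel (\<lambda>x. g (c+x))" by (rule integrable_distr_eq[OF m g])
  finally show "integrable lborel (\<lambda>x. g (c + x)) = integrable lborel g" by simp
qed

lemma cis_quot_lim:
  fixes h :: "nat \<Rightarrow> real"
  assumes h0: "h \<longlonglongrightarrow> 0" and hnz: "\<And>n. h n \<noteq> 0"
  shows "(\<lambda>n. (cis (h n * a) - 1) / of_real (h n)) \<longlonglongrightarrow> \<i> * of_real a"
proof -
  define F where "F = (\<lambda>z::complex. exp (\<i> * of_real a * z))"
  have "(F has_field_derivative (\<i> * of_real a)) (at 0)"
    unfolding F_def by (auto intro!: derivative_eq_intros)
  then have lim: "((\<lambda>z. (F (0 + z) - F 0) / z) \<longlongrightarrow> \<i> * of_real a) (at 0)"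
    by (simp add: DERIV_def)
  have fl: "filterlim (\<lambda>n. complex_of_real (h n)) (at 0) sequentially"
  proof (rule filterlim_atI)
    show "((\<lambda>n. complex_of_real (h n)) \<longlongrightarrow> 0) sequentially"
      using tendsto_of_real[OF h0] by simp
  qed (use hnz in simp)
  have "(\<lambda>n. (F (0 + of_real (h n)) - F 0) / of_real (h n)) \<longlonglongrightarrow> \<i> * of_real a"
    by (rule filterlim_compose[OF lim fl])
  moreover have "(\<lambda>n. (F (0 + of_real (h n)) - F 0) / of_real (h n)) = (\<lambda>n. (cis (h n * a) - 1) / of_real (h n))"
    unfolding F_def by (simp add: cis_conv_exp mult.commute mult.left_commute)
  ultimately show ?thesis by simp
qed

lemma dq_lim:
  fixes f :: "'a::euclidean_space \<Rightarrow> complex"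
  assumes fd: "(f has_derivative L) (at x)" and j: "j \<noteq> 0"
    and h0: "h \<longlonglongrightarrow> 0" and hnz: "\<And>n. h n \<noteq> 0"
  shows "(\<lambda>n. (f (x + h n *\<^sub>R j) - f x) / of_real (h n)) \<longlonglongrightarrow> L j"
proof -
  from fd have bl: "bounded_linear L"
    and lim: "((\<lambda>v. norm (f (x + v) - f x - L v) / norm v) \<longlongrightarrow> 0) (at 0)"
    by (auto simp: has_derivative_at)
  have fl: "filterlim (\<lambda>n. h n *\<^sub>R j) (at 0) sequentially"
  proof (rule filterlim_atI)
    show "((\<lambda>n. h n *\<^sub>R j) \<longlongrightarrow> 0) sequentially"
      using tendsto_scaleR[OF h0 tendsto_const[of j]] by simp
  qed (use hnz j in simp)
  have e: "(\<lambda>n. norm (f (x + h n *\<^sub>R j) - f x - L (h n *\<^sub>R j)) / norm (h n *\<^sub>R j)) \<longlonglongrightarrow> 0"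
    by (rule filterlim_compose[OF lim fl])
  have Ls: "L (h n *\<^sub>R j) = of_real (h n) * L j" for n
    using linear_scale[OF bounded_linear.linear[OF bl]] by (simp add: scaleR_conv_of_real)
  have eq: "norm ((f (x + h n *\<^sub>R j) - f x) / of_real (h n) - L j) =
      norm (f (x + h n *\<^sub>R j) - f x - L (h n *\<^sub>R j)) / norm (h n *\<^sub>R j) * norm j" for n
  proof -
    have "(f (x + h n *\<^sub>R j) - f x) / of_real (h n) - L j
        = (f (x + h n *\<^sub>R j) - f x - L (h n *\<^sub>R j)) / of_real (h n)"
      using hnz[of n] by (simp add: Ls field_simps)
    then show ?thesis using hnz[of n] j by (simp add: norm_divide)
  qed
  have "(\<lambda>n. norm (f (x + h n *\<^sub>R j) - f x - L (h n *\<^sub>R j)) / norm (h n *\<^sub>R j) * norm j) \<longlonglongrightarrow> 0"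
    using tendsto_mult[OF e tendsto_const[of "norm j"]] by simp
  then have "(\<lambda>n. norm ((f (x + h n *\<^sub>R j) - f x) / of_real (h n) - L j)) \<longlonglongrightarrow> 0"
    by (simp only: eq)
  then show ?thesis
    by (simp add: tendsto_norm_zero_iff LIM_zero_iff)
qed

lemma test_onorm_bound:
  assumes psi: "\<psi> \<in> test_fun G"
  shows "\<exists>B. \<forall>y. onorm (frechet_derivative \<psi> (at y)) \<le> B"
proof -
  have "\<forall>b\<in>Basis. \<exists>B. \<forall>x. norm (Dd \<psi> b x) \<le> B"
    using test_bounded[OF test_Dd[OF psi]] by blast
  then obtain Bf where Bf: "\<And>b x. b \<in> Basis \<Longrightarrow> norm (Dd \<psi> b x) \<le> Bf b"
    by metis
  have "onorm (frechet_derivative \<psi> (at y)) \<le> (\<Sum>b\<in>Basis. Bf b)" for y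
  proof (rule onorm_le)
    fix v :: 'a
    define L where "L = frechet_derivative \<psi> (at y)"
    have "(\<psi> has_derivative L) (at y)"
      unfolding L_def using smooth_diff[OF test_props(1)[OF psi]] frechet_derivative_works by blast
    then have lin: "linear L" by (simp add: has_derivative_linear)
    have "L v = L (\<Sum>b\<in>Basis. (v \<bullet> b) *\<^sub>R b)" by (simp add: euclidean_representation)
    also have "\<dots> = (\<Sum>b\<in>Basis. (v \<bullet> b) *\<^sub>R L b)"
      by (simp add: linear_sum[OF lin] linear_scale[OF lin])
    finally have "norm (L v) \<le> (\<Sum>b\<in>Basis. norm ((v \<bullet> b) *\<^sub>R L b))"
      by (metis norm_sum)
    also have "\<dots> \<le> (\<Sum>b\<in>Basis. norm v * Bf b)"
    proof (rule sum_mono)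
      fix b :: 'a assume b: "b \<in> Basis"
      have "norm ((v \<bullet> b) *\<^sub>R L b) = \<bar>v \<bullet> b\<bar> * norm (L b)" by simp
      also have "\<dots> \<le> norm v * Bf b"
        using Bf[OF b, of y] b by (intro mult_mono) (auto simp: L_def Dd_def Basis_le_norm)
      finally show "norm ((v \<bullet> b) *\<^sub>R L b) \<le> norm v * Bf b" .
    qed
    finally show "norm (frechet_derivative \<psi> (at y) v) \<le> (\<Sum>b\<in>Basis. Bf b) * norm v"
      by (simp add: L_def sum_distrib_left mult.commute)
  qed
  then show ?thesis by blast
qed

lemma fourier_Dd_integral:
  assumes psi: "\<psi> \<in> test_fun G" and j: "j \<in> Basis"
  shows "integral\<^sup>L lborel (\<lambda>x. cis (- (\<xi> \<bullet> x)) * Dd \<psi> j x)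
       = \<i> * of_real (\<xi> \<bullet> j) * integral\<^sup>L lborel (\<lambda>x. cis (- (\<xi> \<bullet> x)) * \<psi> x)"
proof -
  define h :: "nat \<Rightarrow> real" where "h n = inverse (real (Suc n))" for n
  have h0: "h \<longlonglongrightarrow> 0" unfolding h_def by (rule LIMSEQ_inverse_real_of_nat)
  have hpos: "h n > 0" for n unfolding h_def by simp
  have hle: "h n \<le> 1" for n unfolding h_def by (simp add: field_simps)
  have hnz: "h n \<noteq> 0" for n using hpos[of n] by simp
  define g where "g x = cis (- (\<xi> \<bullet> x)) * \<psi> x" for x
  have gm: "g \<in> borel_measurable borel"
    unfolding g_def by (intro meas_cis_mult test_meas[OF psi])
  have gi: "integrable lborel g"
    unfolding g_def by (intro integrable_cis_mult test_integrable[OF psi])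
  define Q where "Q n x = cis (- (\<xi> \<bullet> x)) * ((\<psi> (x + h n *\<^sub>R j) - \<psi> x) / of_real (h n))" for n x
  define a where "a = \<xi> \<bullet> j"
  have Qeq: "Q n x = (cis (h n * a) / of_real (h n)) * g (h n *\<^sub>R j + x) - (1 / of_real (h n)) * g x" for n x
  proof -
    have "cis (h n * a) * g (h n *\<^sub>R j + x) = cis (- (\<xi> \<bullet> x)) * \<psi> (x + h n *\<^sub>R j)"
      unfolding g_def a_def by (simp add: inner_add_right cis_mult add.commute mult.assoc)
    then show ?thesis unfolding Q_def g_def using hnz[of n]
      by (simp add: field_simps) metis
  qed
  have gti: "integrable lborel (\<lambda>x. g (c + x))" for c
    using lborel_translate(2)[OF gm] gi by simp
  have intQ: "integral\<^sup>L lborel (Q n) = (cis (h n * a) - 1) / of_real (h n) * integral\<^sup>L lborel g" for n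
  proof -
    have "integral\<^sup>L lborel (Q n) = integral\<^sup>L lborel (\<lambda>x. (cis (h n * a) / of_real (h n)) * g (h n *\<^sub>R j + x) - (1 / of_real (h n)) * g x)"
      by (rule arg_cong[where f="integral\<^sup>L lborel"], rule ext, rule Qeq)
    also have "\<dots> = (cis (h n * a) / of_real (h n)) * integral\<^sup>L lborel (\<lambda>x. g (h n *\<^sub>R j + x)) - (1 / of_real (h n)) * integral\<^sup>L lborel g"
      using gti gi by (simp add: integral_diff)
    also have "\<dots> = (cis (h n * a) - 1) / of_real (h n) * integral\<^sup>L lborel g"
      by (simp only: lborel_translate(1)[OF gm] left_diff_distrib[symmetric] diff_divide_distrib[symmetric])
    finally show ?thesis .
  qed
  have lim1: "(\<lambda>n. integral\<^sup>L lborel (Q n)) \<longlonglongrightarrow> \<i> * of_real a * integral\<^sup>L lborel g"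
    unfolding intQ by (rule tendsto_mult[OF cis_quot_lim[OF h0 hnz] tendsto_const])
  obtain B0 where B0: "\<And>y. onorm (frechet_derivative \<psi> (at y)) \<le> B0"
    using test_onorm_bound[OF psi] by blast
  obtain R where R: "\<And>x. x \<in> tsupp \<psi> \<Longrightarrow> norm x \<le> R"
    using compact_imp_bounded[OF test_props(2)[OF psi]] bounded_iff by metis
  define w where "w x = B0 * indicator (cball (0::'a) (R + 1)) x" for x
  have wi: "integrable lborel w"
    unfolding w_def
    by (intro integrable_mult_right integrable_real_indicator emeasure_bounded_finite) auto
  have dpsi: "(\<psi> has_derivative frechet_derivative \<psi> (at y)) (at y)" for y
    using smooth_diff[OF test_props(1)[OF psi]] frechet_derivative_works by blast
  have nj: "norm j = 1" using j by simp
  have bound: "norm (Q n x) \<le> w x" for n x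
  proof (cases "norm x \<le> R + 1")
    case True
    have "norm (\<psi> (x + h n *\<^sub>R j) - \<psi> x) \<le> norm (h n *\<^sub>R j) * B0"
      by (rule differentiable_bound_segment[of x "h n *\<^sub>R j" UNIV \<psi> "\<lambda>y. frechet_derivative \<psi> (at y)" B0])
         (auto simp: dpsi B0)
    then have "norm (\<psi> (x + h n *\<^sub>R j) - \<psi> x) \<le> h n * B0"
      using hpos[of n] nj by simp
    moreover have "norm (Q n x) = norm (\<psi> (x + h n *\<^sub>R j) - \<psi> x) / h n"
      unfolding Q_def using hpos[of n] by (simp add: norm_mult norm_divide)
    ultimately have "norm (Q n x) \<le> B0"
      using hpos[of n] by (simp add: pos_divide_le_eq mult.commute)
    then show ?thesis using True by (simp add: w_def)
  next
    case False
    have "x \<notin> tsupp \<psi>" using R[of x] False by auto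
    moreover have "x + h n *\<^sub>R j \<notin> tsupp \<psi>"
    proof
      assume "x + h n *\<^sub>R j \<in> tsupp \<psi>"
      then have "norm (x + h n *\<^sub>R j) \<le> R" by (rule R)
      moreover have "norm x \<le> norm (x + h n *\<^sub>R j) + norm (h n *\<^sub>R j)"
        by (metis add_diff_cancel_right' norm_triangle_ineq4)
      moreover have "norm (h n *\<^sub>R j) \<le> 1" using hpos[of n] hle[of n] nj by simp
      ultimately show False using False by simp
    qed
    ultimately have "Q n x = 0"
      unfolding Q_def using test_props(3)[OF psi] by simp
    then show ?thesis using False by (simp add: w_def)
  qed
  have Dm: "Dd \<psi> j \<in> borel_measurable borel" by (rule test_meas[OF test_Dd[OF psi j]])
  have lim2: "(\<lambda>n. integral\<^sup>L lborel (Q n)) \<longlonglongrightarrow> integral\<^sup>L lborel (\<lambda>x. cis (- (\<xi> \<bullet> x)) * Dd \<psi> j x)"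
  proof (rule integral_dominated_convergence[OF _ _ wi])
    show "(\<lambda>x. cis (- (\<xi> \<bullet> x)) * Dd \<psi> j x) \<in> borel_measurable lborel"
      using meas_cis_mult[OF Dm] by simp
    show "Q n \<in> borel_measurable lborel" for n
    proof -
      have c1: "continuous_on UNIV (\<lambda>x::'a. x + h n *\<^sub>R j)" by (intro continuous_intros)
      have c2: "continuous_on UNIV \<psi>" using smooth_cont[OF test_props(1)[OF psi]] .
      have "continuous_on UNIV (\<lambda>x. \<psi> (x + h n *\<^sub>R j))"
        using continuous_on_compose[OF c1 continuous_on_subset[OF c2]] by (simp add: o_def)
      then have "(\<lambda>x. \<psi> (x + h n *\<^sub>R j)) \<in> borel_measurable borel"
        by (rule borel_measurable_continuous_onI)
      then show ?thesis unfolding Q_def using test_meas[OF psi]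
        by (simp add: meas_cis_mult borel_measurable_diff borel_measurable_divide)
    qed
    show "AE x in lborel. (\<lambda>n. Q n x) \<longlonglongrightarrow> cis (- (\<xi> \<bullet> x)) * Dd \<psi> j x"
      unfolding Q_def Dd_def
    proof (rule AE_I2)
      fix x
      have "j \<noteq> 0" using j by auto
      show "(\<lambda>n. cis (- (\<xi> \<bullet> x)) * ((\<psi> (x + h n *\<^sub>R j) - \<psi> x) / complex_of_real (h n)))
          \<longlonglongrightarrow> cis (- (\<xi> \<bullet> x)) * frechet_derivative \<psi> (at x) j"
        by (rule tendsto_mult[OF tendsto_const dq_lim[OF dpsi \<open>j \<noteq> 0\<close> h0 hnz]])
    qed
    show "AE x in lborel. norm (Q n x) \<le> w x" for n
      using bound by simp
  qed
  have gf: "g = (\<lambda>x. cis (- (\<xi> \<bullet> x)) * \<psi> x)" by (simp add: g_def fun_eq_iff)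
  from LIMSEQ_unique[OF lim2 lim1] show ?thesis by (simp only: gf a_def)
qed

lemma fourier_Dd:
  assumes psi: "\<psi> \<in> test_fun G" and j: "j \<in> Basis"
  shows "fourier (Dd \<psi> j) \<xi> = \<i> * of_real (\<xi> \<bullet> j) * fourier \<psi> \<xi>"
  unfolding fourier_def fourier_Dd_integral[OF psi j] by simp

definition Dn :: "('a::euclidean_space \<Rightarrow> complex) \<Rightarrow> 'a \<Rightarrow> nat \<Rightarrow> 'a \<Rightarrow> complex" where
  "Dn f j m = ((\<lambda>g. Dd g j) ^^ m) f"

lemma test_Dn: "f \<in> test_fun G \<Longrightarrow> j \<in> Basis \<Longrightarrow> Dn f j m \<in> test_fun G"
  unfolding Dn_def by (induction m) (auto intro: test_Dd)

lemma fourier_Dn: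
  assumes "f \<in> test_fun G" "j \<in> Basis"
  shows "fourier (Dn f j m) \<xi> = (\<i> * of_real (\<xi> \<bullet> j)) ^ m * fourier f \<xi>"
proof (induction m)
  case 0 then show ?case by (simp add: Dn_def)
next
  case (Suc m)
  have "Dn f j (Suc m) = Dd (Dn f j m) j" by (simp add: Dn_def)
  then show ?case using fourier_Dd[OF test_Dn[OF assms, of m] assms(2), of \<xi>] Suc
    by simp
qed

lemma fourier_norm_bound:
  fixes f :: "'a::euclidean_space \<Rightarrow> complex"
  shows "norm (fourier f \<xi>) \<le> (2 * pi) powr (- real DIM('a) / 2) * (\<integral>x. norm (f x) \<partial>lborel)"
proof -
  have "norm (fourier f \<xi>) = (2 * pi) powr (- real DIM('a) / 2) * norm (\<integral>x. cis (- (\<xi> \<bullet> x)) * f x \<partial>lborel)"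
    unfolding fourier_def by (simp add: norm_mult)
  also have "\<dots> \<le> (2 * pi) powr (- real DIM('a) / 2) * (\<integral>x. norm (cis (- (\<xi> \<bullet> x)) * f x) \<partial>lborel)"
    by (intro mult_left_mono integral_norm_bound) auto
  finally show ?thesis by (simp add: norm_mult)
qed

lemma big_coord:
  fixes \<xi> :: "'a::euclidean_space"
  shows "\<exists>b\<in>Basis. norm \<xi> / real DIM('a) \<le> \<bar>\<xi> \<bullet> b\<bar>"
proof (rule ccontr)
  assume "\<not> ?thesis"
  then have lt: "\<And>b. b \<in> Basis \<Longrightarrow> \<bar>\<xi> \<bullet> b\<bar> < norm \<xi> / real DIM('a)" by auto
  have "norm \<xi> \<le> (\<Sum>b\<in>Basis. \<bar>\<xi> \<bullet> b\<bar>)" by (rule norm_le_l1)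
  also have "\<dots> < (\<Sum>b\<in>(Basis::'a set). norm \<xi> / real DIM('a))"
    by (rule sum_strict_mono) (use lt in auto)
  also have "\<dots> = norm \<xi>" by simp
  finally show False by simp
qed

lemma fourier_decay:
  assumes phi: "\<phi> \<in> test_fun G"
  shows "\<exists>B. \<forall>\<xi>. (1 + (norm \<xi>)\<^sup>2) ^ m * norm (fourier \<phi> \<xi>) \<le> B"
proof -
  define cN where "cN = (2 * pi) powr (- real DIM('a) / 2)"
  define K where "K b n = cN * (\<integral>x. norm (Dn \<phi> b n x) \<partial>lborel)" for b n
  define d where "d = real DIM('a)"
  have d1: "d \<ge> 1" unfolding d_def by (simp add: DIM_positive Suc_le_eq)
  have Kpos: "K b n \<ge> 0" for b n unfolding K_def cN_def by (intro mult_nonneg_nonneg integral_nonneg_AE) auto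
  have K0: "norm (fourier \<phi> \<xi>) \<le> K b 0" for b \<xi>
    using fourier_norm_bound[of \<phi> \<xi>] by (simp add: K_def cN_def Dn_def)
  have Kb: "\<bar>\<xi> \<bullet> b\<bar> ^ n * norm (fourier \<phi> \<xi>) \<le> K b n" if b: "b \<in> Basis" for b n \<xi>
  proof -
    have "norm (fourier (Dn \<phi> b n) \<xi>) = \<bar>\<xi> \<bullet> b\<bar> ^ n * norm (fourier \<phi> \<xi>)"
      unfolding fourier_Dn[OF phi b] by (simp add: norm_mult norm_power)
    then show ?thesis using fourier_norm_bound[of "Dn \<phi> b n" \<xi>] by (simp add: K_def cN_def)
  qed
  obtain b0 where b0: "(b0::'a) \<in> Basis" using nonempty_Basis by blast
  define B where "B = 2 ^ m * K b0 0 + (2 * d\<^sup>2) ^ m * (\<Sum>b\<in>Basis. K b (2 * m))"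
  have "(1 + (norm \<xi>)\<^sup>2) ^ m * norm (fourier \<phi> \<xi>) \<le> B" for \<xi>
  proof (cases "norm \<xi> \<le> 1")
    case True
    have "(1 + (norm \<xi>)\<^sup>2) ^ m \<le> 2 ^ m"
      using True by (intro power_mono) (auto simp: power_le_one)
    then have "(1 + (norm \<xi>)\<^sup>2) ^ m * norm (fourier \<phi> \<xi>) \<le> 2 ^ m * K b0 0"
      using K0[of \<xi> b0] by (intro mult_mono) auto
    moreover have "0 \<le> (2 * d\<^sup>2) ^ m * (\<Sum>b\<in>Basis. K b (2 * m))"
      using Kpos by (intro mult_nonneg_nonneg sum_nonneg) auto
    ultimately show ?thesis unfolding B_def by linarith
  next
    case False
    obtain b where b: "b \<in> Basis" and bb: "norm \<xi> / d \<le> \<bar>\<xi> \<bullet> b\<bar>"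
      using big_coord[of \<xi>] unfolding d_def by blast
    have "norm \<xi> \<le> d * \<bar>\<xi> \<bullet> b\<bar>" using bb d1 by (simp add: field_simps)
    then have "(norm \<xi>)\<^sup>2 \<le> (d * \<bar>\<xi> \<bullet> b\<bar>)\<^sup>2" by (intro power_mono) auto
    then have "1 + (norm \<xi>)\<^sup>2 \<le> 2 * d\<^sup>2 * \<bar>\<xi> \<bullet> b\<bar>\<^sup>2"
    proof -
      have "1 \<le> (norm \<xi>)\<^sup>2" using False by (intro one_le_power) simp
      moreover have "(d * \<bar>\<xi> \<bullet> b\<bar>)\<^sup>2 = d\<^sup>2 * \<bar>\<xi> \<bullet> b\<bar>\<^sup>2" by (simp add: power_mult_distrib)
      ultimately show ?thesis using \<open>(norm \<xi>)\<^sup>2 \<le> (d * \<bar>\<xi> \<bullet> b\<bar>)\<^sup>2\<close> by linarith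
    qed
    then have "(1 + (norm \<xi>)\<^sup>2) ^ m \<le> (2 * d\<^sup>2 * \<bar>\<xi> \<bullet> b\<bar>\<^sup>2) ^ m"
      by (intro power_mono) auto
    also have "\<dots> = (2 * d\<^sup>2) ^ m * \<bar>\<xi> \<bullet> b\<bar> ^ (2 * m)"
      by (simp add: power_mult_distrib power_mult)
    finally have "(1 + (norm \<xi>)\<^sup>2) ^ m * norm (fourier \<phi> \<xi>) \<le> (2 * d\<^sup>2) ^ m * (\<bar>\<xi> \<bullet> b\<bar> ^ (2 * m) * norm (fourier \<phi> \<xi>))"
      by (metis mult.assoc mult_right_mono norm_ge_zero)
    also have "\<dots> \<le> (2 * d\<^sup>2) ^ m * K b (2 * m)"
      using Kb[OF b] by (intro mult_left_mono) auto
    also have "\<dots> \<le> (2 * d\<^sup>2) ^ m * (\<Sum>b\<in>Basis. K b (2 * m))"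
      using b Kpos by (intro mult_left_mono member_le_sum) auto
    also have "\<dots> \<le> B" unfolding B_def using Kpos[of b0 0] by simp
    finally show ?thesis .
  qed
  then show ?thesis by blast
qed

lemma integrable_inv1:
  "integrable lborel (\<lambda>t::real. inverse (1 + t\<^sup>2))"
  using integrable_inverse_1_plus_square by (simp add: set_integrable_def)

lemma integrable_prod_inv:
  "integrable lborel (\<lambda>\<xi>::'a::euclidean_space. \<Prod>b\<in>Basis. inverse (1 + (\<xi> \<bullet> b)\<^sup>2))"
proof (rule integrableI_nonneg)
  show "(\<lambda>\<xi>::'a. \<Prod>b\<in>Basis. inverse (1 + (\<xi> \<bullet> b)\<^sup>2)) \<in> borel_measurable lborel"
    by (simp add: borel_measurable_continuous_onI continuous_intros add_nonneg_eq_0_iff)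
  show "AE x in lborel. 0 \<le> (\<Prod>b\<in>Basis. inverse (1 + (x \<bullet> b)\<^sup>2))"
    by (intro AE_I2 prod_nonneg) auto
  define I :: real where "I = (\<integral>t. inverse (1 + (t::real)\<^sup>2) \<partial>lborel)"
  have I: "(\<integral>\<^sup>+t. ennreal (inverse (1 + (t::real)\<^sup>2)) \<partial>lborel) = ennreal I"
    unfolding I_def by (intro nn_integral_eq_integral integrable_inv1) auto
  have "(\<integral>\<^sup>+x. ennreal (\<Prod>b\<in>Basis. inverse (1 + (x \<bullet> b)\<^sup>2)) \<partial>(lborel::'a measure))
      = (\<integral>\<^sup>+x. (\<Prod>b\<in>Basis. ennreal (inverse (1 + ((x::'a) \<bullet> b)\<^sup>2))) \<partial>lborel)"
  proof (rule nn_integral_cong)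
    fix x :: 'a
    show "ennreal (\<Prod>b\<in>Basis. inverse (1 + (x \<bullet> b)\<^sup>2)) = (\<Prod>b\<in>Basis. ennreal (inverse (1 + (x \<bullet> b)\<^sup>2)))"
      by (rule prod_ennreal[symmetric]) simp
  qed
  also have "\<dots> = (\<Prod>b\<in>(Basis::'a set). (\<integral>\<^sup>+t. ennreal (inverse (1 + (t::real)\<^sup>2)) \<partial>lborel))"
    by (rule nn_integral_lborel_prod) (auto simp: borel_measurable_continuous_onI continuous_intros add_nonneg_eq_0_iff)
  also have "\<dots> = ennreal (\<Prod>b\<in>(Basis::'a set). I)"
    unfolding I by (rule prod_ennreal) (simp add: I_def integral_nonneg_AE)
  finally show "(\<integral>\<^sup>+x. ennreal (\<Prod>b\<in>Basis. inverse (1 + (x \<bullet> b)\<^sup>2)) \<partial>(lborel::'a measure)) < \<infinity>"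
    by simp
qed

lemma fourier_meas:
  assumes phi: "\<phi> \<in> test_fun G"
  shows "fourier \<phi> \<in> borel_measurable lborel"
proof -
  have c: "continuous_on UNIV \<phi>" using smooth_cont[OF test_props(1)[OF phi]] .
  have "continuous_on UNIV (\<lambda>p::'a\<times>'a. cis (- (fst p \<bullet> snd p)) * \<phi> (snd p))"
    by (intro continuous_intros continuous_on_compose2[OF c]) auto
  then have "(\<lambda>p::'a\<times>'a. cis (- (fst p \<bullet> snd p)) * \<phi> (snd p)) \<in> borel_measurable (lborel \<Otimes>\<^sub>M lborel)"
    unfolding lborel_prod by (simp add: borel_measurable_continuous_onI)
  then have "(\<lambda>\<xi>. \<integral>x. cis (- (\<xi> \<bullet> x)) * \<phi> x \<partial>lborel) \<in> borel_measurable lborel"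
    by (intro lborel.borel_measurable_lebesgue_integral) (simp add: case_prod_beta)
  then show ?thesis unfolding fourier_def by (intro borel_measurable_times) auto
qed

lemma weight_prod_bound:
  fixes \<xi> :: "'a::euclidean_space"
  shows "(1 + (norm \<xi>)\<^sup>2) powr (- real DIM('a)) \<le> (\<Prod>b\<in>Basis. inverse (1 + (\<xi> \<bullet> b)\<^sup>2))"
proof -
  define u where "u = 1 + (norm \<xi>)\<^sup>2"
  have u1: "u \<ge> 1" unfolding u_def by simp
  have "(\<Prod>b\<in>Basis. 1 + (\<xi> \<bullet> b)\<^sup>2) \<le> (\<Prod>b\<in>(Basis::'a set). u)"
  proof (rule prod_mono)
    fix b :: 'a assume b: "b \<in> Basis"
    have "\<bar>\<xi> \<bullet> b\<bar> \<le> norm \<xi>" using b by (rule Basis_le_norm)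
    then have "(\<xi> \<bullet> b)\<^sup>2 \<le> (norm \<xi>)\<^sup>2"
      by (metis abs_ge_zero power2_abs power_mono)
    then show "0 \<le> 1 + (\<xi> \<bullet> b)\<^sup>2 \<and> 1 + (\<xi> \<bullet> b)\<^sup>2 \<le> u" unfolding u_def by simp
  qed
  also have "\<dots> = u ^ DIM('a)" by simp
  finally have le: "(\<Prod>b\<in>Basis. 1 + (\<xi> \<bullet> b)\<^sup>2) \<le> u ^ DIM('a)" .
  have pos: "0 < (\<Prod>b\<in>(Basis::'a set). 1 + (\<xi> \<bullet> b)\<^sup>2)"
    by (intro prod_pos) (auto simp: add_pos_nonneg)
  have "u powr (- real DIM('a)) = inverse (u ^ DIM('a))"
    using u1 by (simp add: powr_minus powr_realpow)
  also have "\<dots> \<le> inverse (\<Prod>b\<in>Basis. 1 + (\<xi> \<bullet> b)\<^sup>2)"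
    using le pos by (rule le_imp_inverse_le)
  also have "\<dots> = (\<Prod>b\<in>Basis. inverse (1 + (\<xi> \<bullet> b)\<^sup>2))"
    using prod_inversef[of "\<lambda>b. 1 + (\<xi> \<bullet> b)\<^sup>2" Basis] by (simp add: o_def)
  finally show ?thesis unfolding u_def .
qed

lemma fourier_weighted_integrable:
  assumes phi: "\<phi> \<in> test_fun G"
  shows "integrable lborel (\<lambda>\<xi>. (1 + (norm \<xi>)\<^sup>2) powr p * (cmod (fourier \<phi> \<xi>))\<^sup>2)"
proof -
  define d where "d = real DIM('a)"
  obtain m :: nat where m: "p + d \<le> real m" using real_arch_simple by blast
  obtain B where B: "\<And>\<xi>. (1 + (norm \<xi>)\<^sup>2) ^ m * norm (fourier \<phi> \<xi>) \<le> B"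
    using fourier_decay[OF phi, of m] by blast
  have bnd: "(1 + (norm \<xi>)\<^sup>2) powr p * (cmod (fourier \<phi> \<xi>))\<^sup>2 \<le> B\<^sup>2 * (\<Prod>b\<in>Basis. inverse (1 + (\<xi> \<bullet> b)\<^sup>2))" for \<xi>
  proof -
    define u where "u = 1 + (norm \<xi>)\<^sup>2"
    have u1: "u \<ge> 1" unfolding u_def by simp
    have upos: "u ^ m > 0" using u1 by simp
    have "norm (fourier \<phi> \<xi>) \<le> B / u ^ m"
      using B[of \<xi>] upos unfolding u_def by (simp add: field_simps)
    then have "(cmod (fourier \<phi> \<xi>))\<^sup>2 \<le> (B / u ^ m)\<^sup>2"
      by (intro power_mono) auto
    also have "\<dots> = B\<^sup>2 / u ^ (m * 2)"
      by (simp add: power_divide power_mult)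
    also have "\<dots> = B\<^sup>2 / u powr (2 * real m)"
      using powr_realpow[of u "m * 2"] u1 by (simp add: mult.commute)
    finally have f2: "(cmod (fourier \<phi> \<xi>))\<^sup>2 \<le> B\<^sup>2 / u powr (2 * real m)" .
    have "u powr p * (cmod (fourier \<phi> \<xi>))\<^sup>2 \<le> u powr p * (B\<^sup>2 / u powr (2 * real m))"
      using f2 by (intro mult_left_mono) auto
    also have "\<dots> = B\<^sup>2 * u powr (p - 2 * real m)"
      using u1 by (simp add: powr_diff)
    also have "\<dots> \<le> B\<^sup>2 * u powr (- d)"
      using u1 m by (intro mult_left_mono powr_mono) (auto simp: d_def)
    also have "\<dots> \<le> B\<^sup>2 * (\<Prod>b\<in>Basis. inverse (1 + (\<xi> \<bullet> b)\<^sup>2))"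
      using weight_prod_bound[of \<xi>] unfolding u_def d_def by (intro mult_left_mono) auto
    finally show ?thesis unfolding u_def .
  qed
  show ?thesis
  proof (rule Bochner_Integration.integrable_bound)
    show "integrable lborel (\<lambda>\<xi>::'a. B\<^sup>2 * (\<Prod>b\<in>Basis. inverse (1 + (\<xi> \<bullet> b)\<^sup>2)))"
      by (intro integrable_mult_right integrable_prod_inv)
    show "(\<lambda>\<xi>. (1 + (norm \<xi>)\<^sup>2) powr p * (cmod (fourier \<phi> \<xi>))\<^sup>2) \<in> borel_measurable lborel"
      using fourier_meas[OF phi] by measurable
    show "AE x in lborel. norm ((1 + (norm x)\<^sup>2) powr p * (cmod (fourier \<phi> x))\<^sup>2)
          \<le> norm (B\<^sup>2 * (\<Prod>b\<in>Basis. inverse (1 + (x \<bullet> b)\<^sup>2)))"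
    proof (rule AE_I2)
      fix x :: 'a
      have "0 \<le> (1 + (norm x)\<^sup>2) powr p * (cmod (fourier \<phi> x))\<^sup>2" by simp
      moreover have "0 \<le> B\<^sup>2 * (\<Prod>b\<in>Basis. inverse (1 + (x \<bullet> b)\<^sup>2))"
        by (intro mult_nonneg_nonneg prod_nonneg) auto
      ultimately show "norm ((1 + (norm x)\<^sup>2) powr p * (cmod (fourier \<phi> x))\<^sup>2)
          \<le> norm (B\<^sup>2 * (\<Prod>b\<in>Basis. inverse (1 + (x \<bullet> b)\<^sup>2)))"
        using bnd[of x] by simp
    qed
  qed
qed

lemma amgm_inf:
  fixes A B X :: real
  assumes A: "A \<ge> 0" and B: "B \<ge> 0" and H: "\<And>t. t > 0 \<Longrightarrow> X \<le> (t * A + B / t) / 2"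
  shows "X \<le> sqrt A * sqrt B"
proof (cases "A > 0 \<and> B > 0")
  case True
  define t where "t = sqrt B / sqrt A"
  have t: "t > 0" using True by (simp add: t_def)
  have "t * A = sqrt A * sqrt B"
    using True unfolding t_def by (simp add: field_simps)
  moreover have "B / t = sqrt A * sqrt B"
    using True unfolding t_def by (simp add: field_simps)
  ultimately show ?thesis using H[OF t] by simp
next
  case False
  show ?thesis
  proof (rule ccontr)
    assume "\<not> ?thesis"
    then have X: "X > 0" using False A B by auto
    show False
    proof (cases "A = 0")
      case True
      define t where "t = (B + 1) / X"
      have t: "t > 0" using X B by (simp add: t_def)
      have "B / t = B * X / (B + 1)" using X B by (simp add: t_def field_simps)
      also have "\<dots> < X" using X B by (simp add: field_simps)
      finally have "X < X / 2" using H[OF t] True by simp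
      then show False using X by simp
    next
      case False
      then have A0: "A > 0" using A by simp
      then have B0: "B = 0" using \<open>\<not> (A > 0 \<and> B > 0)\<close> B by simp
      define t where "t = X / (A + 1)"
      have t: "t > 0" using X A by (simp add: t_def)
      have "t * A < X" using X A0 by (simp add: t_def field_simps)
      then have "X < X / 2" using H[OF t] B0 by simp
      then show False using X by simp
    qed
  qed
qed

lemma cauchy_schwarz_weighted:
  fixes U W :: "'a::euclidean_space \<Rightarrow> complex" and a b :: "'a \<Rightarrow> real"
  assumes Um: "U \<in> borel_measurable lborel" and Wm: "W \<in> borel_measurable lborel"
    and ia: "integrable lborel (\<lambda>\<xi>. a \<xi> * (cmod (U \<xi>))\<^sup>2)"
    and ib: "integrable lborel (\<lambda>\<xi>. b \<xi> * (cmod (W \<xi>))\<^sup>2)"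
    and apos: "\<And>\<xi>. a \<xi> > 0" and bpos: "\<And>\<xi>. b \<xi> > 0" and ab: "\<And>\<xi>. a \<xi> * b \<xi> = 1"
  shows "integrable lborel (\<lambda>\<xi>. U \<xi> * cnj (W \<xi>))"
    and "cmod (\<integral>\<xi>. U \<xi> * cnj (W \<xi>) \<partial>lborel)
          \<le> sqrt (\<integral>\<xi>. a \<xi> * (cmod (U \<xi>))\<^sup>2 \<partial>lborel) * sqrt (\<integral>\<xi>. b \<xi> * (cmod (W \<xi>))\<^sup>2 \<partial>lborel)"
proof -
  have pw: "cmod (U \<xi> * cnj (W \<xi>)) \<le> (t * (a \<xi> * (cmod (U \<xi>))\<^sup>2) + (b \<xi> * (cmod (W \<xi>))\<^sup>2) / t) / 2"
    if t: "t > 0" for t \<xi>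
  proof -
    define x where "x = sqrt (a \<xi>) * cmod (U \<xi>)"
    define y where "y = sqrt (b \<xi>) * cmod (W \<xi>)"
    have xy: "x * y = cmod (U \<xi> * cnj (W \<xi>))"
      unfolding x_def y_def using apos[of \<xi>] bpos[of \<xi>] ab[of \<xi>]
      by (simp add: norm_mult) (metis (no_types, lifting) mult.assoc mult.commute real_sqrt_mult real_sqrt_one)
    have x2: "x\<^sup>2 = a \<xi> * (cmod (U \<xi>))\<^sup>2" unfolding x_def using apos[of \<xi>] by (simp add: power_mult_distrib)
    have y2: "y\<^sup>2 = b \<xi> * (cmod (W \<xi>))\<^sup>2" unfolding y_def using bpos[of \<xi>] by (simp add: power_mult_distrib)
    have "0 \<le> (sqrt t * x - y / sqrt t)\<^sup>2" by simp
    also have "\<dots> = t * x\<^sup>2 - 2 * (x * y) + y\<^sup>2 / t"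
      using t by (simp add: power2_eq_square field_simps)
    finally have "x * y \<le> (t * x\<^sup>2 + y\<^sup>2 / t) / 2" by simp
    then show ?thesis using xy x2 y2 by simp
  qed
  have meas: "(\<lambda>\<xi>. U \<xi> * cnj (W \<xi>)) \<in> borel_measurable lborel"
  proof -
    have c: "(cnj :: complex \<Rightarrow> complex) \<in> borel_measurable borel"
      by (intro borel_measurable_continuous_onI continuous_intros)
    have "(\<lambda>x. cnj (W x)) \<in> borel_measurable lborel"
      using measurable_compose[OF Wm c] by (simp add: o_def)
    then show ?thesis using Um by (intro borel_measurable_times)
  qed
  have ib1: "integrable lborel (\<lambda>\<xi>. (t * (a \<xi> * (cmod (U \<xi>))\<^sup>2) + (b \<xi> * (cmod (W \<xi>))\<^sup>2) / t) / 2)" for t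
    using ia ib by (intro integrable_divide integrable_add integrable_mult_right) auto
  show int: "integrable lborel (\<lambda>\<xi>. U \<xi> * cnj (W \<xi>))"
  proof (rule Bochner_Integration.integrable_bound[OF ib1[of 1] meas])
    show "AE x in lborel. norm (U x * cnj (W x)) \<le> norm ((1 * (a x * (cmod (U x))\<^sup>2) + b x * (cmod (W x))\<^sup>2 / 1) / 2)"
      using pw[of 1] by (intro AE_I2) (smt (verit) real_norm_def)
  qed
  define A where "A = (\<integral>\<xi>. a \<xi> * (cmod (U \<xi>))\<^sup>2 \<partial>lborel)"
  define B where "B = (\<integral>\<xi>. b \<xi> * (cmod (W \<xi>))\<^sup>2 \<partial>lborel)"
  have A0: "A \<ge> 0" unfolding A_def using apos by (intro integral_nonneg_AE AE_I2) (simp add: less_imp_le)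
  have B0: "B \<ge> 0" unfolding B_def using bpos by (intro integral_nonneg_AE AE_I2) (simp add: less_imp_le)
  have "cmod (\<integral>\<xi>. U \<xi> * cnj (W \<xi>) \<partial>lborel) \<le> sqrt A * sqrt B"
  proof (rule amgm_inf[OF A0 B0])
    fix t :: real assume t: "t > 0"
    have "cmod (\<integral>\<xi>. U \<xi> * cnj (W \<xi>) \<partial>lborel) \<le> (\<integral>\<xi>. cmod (U \<xi> * cnj (W \<xi>)) \<partial>lborel)"
      by (rule integral_norm_bound)
    also have "\<dots> \<le> (\<integral>\<xi>. (t * (a \<xi> * (cmod (U \<xi>))\<^sup>2) + (b \<xi> * (cmod (W \<xi>))\<^sup>2) / t) / 2 \<partial>lborel)"
      by (intro integral_mono integrable_norm int ib1 pw t)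
    also have "\<dots> = (t * A + B / t) / 2"
      unfolding A_def B_def using ia ib by simp
    finally show "cmod (\<integral>\<xi>. U \<xi> * cnj (W \<xi>) \<partial>lborel) \<le> (t * A + B / t) / 2" .
  qed
  then show "cmod (\<integral>\<xi>. U \<xi> * cnj (W \<xi>) \<partial>lborel)
          \<le> sqrt (\<integral>\<xi>. a \<xi> * (cmod (U \<xi>))\<^sup>2 \<partial>lborel) * sqrt (\<integral>\<xi>. b \<xi> * (cmod (W \<xi>))\<^sup>2 \<partial>lborel)"
    unfolding A_def B_def .
qed

lemma sob_weight_norm:
  assumes k: "k > 0"
  shows "sob_weight k \<sigma> \<xi> = k powr (2 * \<sigma>) * (1 + (norm \<xi>)\<^sup>2 / k\<^sup>2) powr \<sigma>"
proof -
  have "k\<^sup>2 + (norm \<xi>)\<^sup>2 = k\<^sup>2 * (1 + (norm \<xi>)\<^sup>2 / k\<^sup>2)" using k by (simp add: field_simps)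
  then have "sob_weight k \<sigma> \<xi> = (k\<^sup>2) powr \<sigma> * (1 + (norm \<xi>)\<^sup>2 / k\<^sup>2) powr \<sigma>"
    unfolding sob_weight_def by (simp add: powr_mult)
  moreover have "(k\<^sup>2) powr \<sigma> = k powr (2 * \<sigma>)"
  proof -
    have "k\<^sup>2 = k powr 2" using powr_realpow[of k 2] k by simp
    then show ?thesis by (simp add: powr_powr)
  qed
  ultimately show ?thesis by simp
qed

lemma normw_bound:
  assumes k: "k \<ge> 1"
  shows "(1 + (norm \<xi>)\<^sup>2 / k\<^sup>2) powr \<sigma> \<le> (1 + (norm \<xi>)\<^sup>2) powr \<bar>\<sigma>\<bar>"
proof -
  have a: "(norm \<xi>)\<^sup>2 / k\<^sup>2 \<le> (norm \<xi>)\<^sup>2"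
  proof -
    have "1 \<le> k\<^sup>2" using k by (simp add: one_le_power)
    then have "(norm \<xi>)\<^sup>2 / k\<^sup>2 \<le> (norm \<xi>)\<^sup>2 / 1"
      by (intro divide_left_mono) auto
    then show ?thesis by simp
  qed
  have b: "0 \<le> (norm \<xi>)\<^sup>2 / k\<^sup>2" by simp
  show ?thesis
  proof (cases "\<sigma> \<ge> 0")
    case True
    then show ?thesis using a b by (simp add: powr_mono2)
  next
    case False
    have "(1 + (norm \<xi>)\<^sup>2 / k\<^sup>2) powr \<sigma> \<le> 1"
    proof -
      have c: "1 + (norm \<xi>)\<^sup>2 / k\<^sup>2 \<noteq> 0" using b by linarith
      show ?thesis using False b c powr_mono[of \<sigma> 0 "1 + (norm \<xi>)\<^sup>2 / k\<^sup>2"] by simp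
    qed
    also have "1 \<le> (1 + (norm \<xi>)\<^sup>2) powr \<bar>\<sigma>\<bar>" by (simp add: ge_one_powr_ge_zero)
    finally show ?thesis .
  qed
qed

lemma sob_weight_meas: "(\<lambda>\<xi>::'a::euclidean_space. sob_weight k \<sigma> \<xi>) \<in> borel_measurable lborel"
  unfolding sob_weight_def by measurable

lemma Phi2_integrable:
  assumes phi: "\<phi> \<in> test_fun G"
  shows "integrable lborel (\<lambda>\<xi>. (cmod (fourier \<phi> \<xi>))\<^sup>2)"
proof -
  have "(1 + (norm \<xi>)\<^sup>2) powr 0 = 1" for \<xi> :: 'a
    by (simp add: add_nonneg_eq_0_iff)
  then show ?thesis using fourier_weighted_integrable[OF phi, of 0] by simp
qed

lemma sob_integrable:
  assumes phi: "\<phi> \<in> test_fun G" and k: "k \<ge> 1"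
  shows "integrable lborel (\<lambda>\<xi>. sob_weight k \<sigma> \<xi> * (cmod (fourier \<phi> \<xi>))\<^sup>2)"
proof (rule Bochner_Integration.integrable_bound)
  show "integrable lborel (\<lambda>\<xi>. k powr (2 * \<sigma>) * ((1 + (norm \<xi>)\<^sup>2) powr \<bar>\<sigma>\<bar> * (cmod (fourier \<phi> \<xi>))\<^sup>2))"
    by (intro integrable_mult_right fourier_weighted_integrable[OF phi])
  show "(\<lambda>\<xi>. sob_weight k \<sigma> \<xi> * (cmod (fourier \<phi> \<xi>))\<^sup>2) \<in> borel_measurable lborel"
    using sob_weight_meas fourier_meas[OF phi] by measurable
  show "AE x in lborel. norm (sob_weight k \<sigma> x * (cmod (fourier \<phi> x))\<^sup>2)
        \<le> norm (k powr (2 * \<sigma>) * ((1 + (norm x)\<^sup>2) powr \<bar>\<sigma>\<bar> * (cmod (fourier \<phi> x))\<^sup>2))"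
  proof (rule AE_I2)
    fix x :: 'a
    have "sob_weight k \<sigma> x * (cmod (fourier \<phi> x))\<^sup>2 = k powr (2 * \<sigma>) * ((1 + (norm x)\<^sup>2 / k\<^sup>2) powr \<sigma> * (cmod (fourier \<phi> x))\<^sup>2)"
      using k by (simp add: sob_weight_norm)
    also have "\<dots> \<le> k powr (2 * \<sigma>) * ((1 + (norm x)\<^sup>2) powr \<bar>\<sigma>\<bar> * (cmod (fourier \<phi> x))\<^sup>2)"
      using normw_bound[OF k] by (intro mult_left_mono mult_right_mono) auto
    finally show "norm (sob_weight k \<sigma> x * (cmod (fourier \<phi> x))\<^sup>2)
        \<le> norm (k powr (2 * \<sigma>) * ((1 + (norm x)\<^sup>2) powr \<bar>\<sigma>\<bar> * (cmod (fourier \<phi> x))\<^sup>2))"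
      by (simp add: sob_weight_def)
  qed
qed

lemma lim_one_plus: "((\<lambda>t::real. 1 + c / t\<^sup>2) \<longlongrightarrow> 1) at_top"
proof -
  have "filterlim (\<lambda>t::real. t ^ 2) at_top at_top"
    by (intro filterlim_pow_at_top filterlim_ident) auto
  then have "((\<lambda>t::real. inverse (t\<^sup>2)) \<longlongrightarrow> 0) at_top"
    by (rule tendsto_inverse_0_at_top)
  then have "((\<lambda>t::real. c * inverse (t\<^sup>2)) \<longlongrightarrow> c * 0) at_top"
    by (intro tendsto_mult tendsto_const)
  then have "((\<lambda>t::real. 1 + c * inverse (t\<^sup>2)) \<longlongrightarrow> 1 + c * 0) at_top"
    by (intro tendsto_add tendsto_const)
  then show ?thesis by (simp add: divide_inverse)
qed

lemma lim_N:
  assumes phi: "\<phi> \<in> test_fun G"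
  shows "((\<lambda>k. (\<integral>\<xi>. sob_weight k \<sigma> \<xi> * (cmod (fourier \<phi> \<xi>))\<^sup>2 \<partial>lborel) / k powr (2 * \<sigma>))
          \<longlongrightarrow> (\<integral>\<xi>. (cmod (fourier \<phi> \<xi>))\<^sup>2 \<partial>lborel)) at_top"
proof -
  define s where "s k \<xi> = (1 + (norm \<xi>)\<^sup>2 / k\<^sup>2) powr \<sigma> * (cmod (fourier \<phi> \<xi>))\<^sup>2" for k \<xi>
  have lim: "((\<lambda>k. integral\<^sup>L lborel (s k)) \<longlongrightarrow> (\<integral>\<xi>. (cmod (fourier \<phi> \<xi>))\<^sup>2 \<partial>lborel)) at_top"
  proof (rule integral_dominated_convergence_at_top[where w="\<lambda>\<xi>. (1 + (norm \<xi>)\<^sup>2) powr \<bar>\<sigma>\<bar> * (cmod (fourier \<phi> \<xi>))\<^sup>2"])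
    show "(\<lambda>\<xi>. (cmod (fourier \<phi> \<xi>))\<^sup>2) \<in> borel_measurable lborel"
      using fourier_meas[OF phi] by measurable
    show "s t \<in> borel_measurable lborel" for t
      unfolding s_def using fourier_meas[OF phi] by measurable
    show "integrable lborel (\<lambda>\<xi>. (1 + (norm \<xi>)\<^sup>2) powr \<bar>\<sigma>\<bar> * (cmod (fourier \<phi> \<xi>))\<^sup>2)"
      by (rule fourier_weighted_integrable[OF phi])
    show "AE x in lborel. ((\<lambda>i. s i x) \<longlongrightarrow> (cmod (fourier \<phi> x))\<^sup>2) at_top"
    proof (rule AE_I2)
      fix x :: 'a
      have "((\<lambda>i. (1 + (norm x)\<^sup>2 / i\<^sup>2) powr \<sigma>) \<longlongrightarrow> 1 powr \<sigma>) at_top"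
        by (intro tendsto_powr lim_one_plus tendsto_const) auto
      then have "((\<lambda>i. (1 + (norm x)\<^sup>2 / i\<^sup>2) powr \<sigma> * (cmod (fourier \<phi> x))\<^sup>2) \<longlongrightarrow> 1 powr \<sigma> * (cmod (fourier \<phi> x))\<^sup>2) at_top"
        by (intro tendsto_mult tendsto_const)
      then show "((\<lambda>i. s i x) \<longlongrightarrow> (cmod (fourier \<phi> x))\<^sup>2) at_top"
        by (simp add: s_def)
    qed
    show "\<forall>\<^sub>F i in at_top. AE x in lborel. norm (s i x) \<le> (1 + (norm x)\<^sup>2) powr \<bar>\<sigma>\<bar> * (cmod (fourier \<phi> x))\<^sup>2"
      using eventually_ge_at_top[of "1::real"]
    proof eventually_elim
      case (elim i)
      show ?case
        by (intro AE_I2) (use normw_bound[OF elim] in \<open>auto simp: s_def intro!: mult_right_mono\<close>)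
    qed
  qed
  have ev: "\<forall>\<^sub>F k in at_top. integral\<^sup>L lborel (s k) = (\<integral>\<xi>. sob_weight k \<sigma> \<xi> * (cmod (fourier \<phi> \<xi>))\<^sup>2 \<partial>lborel) / k powr (2 * \<sigma>)"
    using eventually_gt_at_top[of "0::real"]
  proof eventually_elim
    case (elim k)
    have "(\<integral>\<xi>. sob_weight k \<sigma> \<xi> * (cmod (fourier \<phi> \<xi>))\<^sup>2 \<partial>lborel)
        = (\<integral>\<xi>. k powr (2 * \<sigma>) * s k \<xi> \<partial>lborel)"
      using elim by (simp add: sob_weight_norm s_def mult.assoc)
    also have "\<dots> = k powr (2 * \<sigma>) * integral\<^sup>L lborel (s k)" by simp
    finally show ?case using elim by simp
  qed
  show ?thesis using Lim_transform_eventually[OF lim ev] .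
qed

definition aK :: "real \<Rightarrow> ('a::euclidean_space \<Rightarrow> complex) \<Rightarrow> 'a \<Rightarrow> real" where
  "aK k \<phi> \<xi> = (if norm \<xi> \<le> k then sqrt (k\<^sup>2 - (norm \<xi>)\<^sup>2) else 0) * (cmod (fourier \<phi> \<xi>))\<^sup>2 / 2"

lemma aK_div:
  assumes k: "k > 0"
  shows "aK k \<phi> \<xi> / k = (if norm \<xi> \<le> k then sqrt (1 + (- (norm \<xi>)\<^sup>2) / k\<^sup>2) else 0) * (cmod (fourier \<phi> \<xi>))\<^sup>2 / 2"
proof -
  have "sqrt (k\<^sup>2 - (norm \<xi>)\<^sup>2) / k = sqrt (1 + (- (norm \<xi>)\<^sup>2) / k\<^sup>2)"
  proof -
    have "1 + (- (norm \<xi>)\<^sup>2) / k\<^sup>2 = (k\<^sup>2 - (norm \<xi>)\<^sup>2) / k\<^sup>2" using k by (simp add: field_simps)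
    then have "sqrt (1 + (- (norm \<xi>)\<^sup>2) / k\<^sup>2) = sqrt (k\<^sup>2 - (norm \<xi>)\<^sup>2) / sqrt (k\<^sup>2)"
      by (simp add: real_sqrt_divide)
    then show ?thesis using k by simp
  qed
  note e = this
  show ?thesis
  proof (cases "norm \<xi> \<le> k")
    case True
    have "aK k \<phi> \<xi> / k = (sqrt (k\<^sup>2 - (norm \<xi>)\<^sup>2) / k) * (cmod (fourier \<phi> \<xi>))\<^sup>2 / 2"
      unfolding aK_def using True by simp
    then show ?thesis using True by (simp only: e) simp
  next
    case False
    then show ?thesis unfolding aK_def by simp
  qed
qed

lemma lim_A:
  assumes phi: "\<phi> \<in> test_fun G"
  shows "((\<lambda>k. (\<integral>\<xi>. aK k \<phi> \<xi> \<partial>lborel) / k) \<longlongrightarrow> (\<integral>\<xi>. (cmod (fourier \<phi> \<xi>))\<^sup>2 \<partial>lborel) / 2) at_top"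
proof -
  define s where "s k \<xi> = (if norm \<xi> \<le> k then sqrt (1 + (- (norm \<xi>)\<^sup>2) / k\<^sup>2) else 0) * (cmod (fourier \<phi> \<xi>))\<^sup>2 / 2" for k \<xi>
  have lim: "((\<lambda>k. integral\<^sup>L lborel (s k)) \<longlongrightarrow> (\<integral>\<xi>. (cmod (fourier \<phi> \<xi>))\<^sup>2 / 2 \<partial>lborel)) at_top"
  proof (rule integral_dominated_convergence_at_top[where w="\<lambda>\<xi>. (cmod (fourier \<phi> \<xi>))\<^sup>2 / 2"])
    show "(\<lambda>\<xi>. (cmod (fourier \<phi> \<xi>))\<^sup>2 / 2) \<in> borel_measurable lborel"
      using fourier_meas[OF phi] by measurable
    show "s t \<in> borel_measurable lborel" for t
      unfolding s_def using fourier_meas[OF phi] by measurable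
    show "integrable lborel (\<lambda>\<xi>. (cmod (fourier \<phi> \<xi>))\<^sup>2 / 2)"
      using Phi2_integrable[OF phi] by simp
    show "AE x in lborel. ((\<lambda>i. s i x) \<longlongrightarrow> (cmod (fourier \<phi> x))\<^sup>2 / 2) at_top"
    proof (rule AE_I2)
      fix x :: 'a
      have "((\<lambda>i. sqrt (1 + (- (norm x)\<^sup>2) / i\<^sup>2)) \<longlongrightarrow> sqrt 1) at_top"
        by (intro tendsto_real_sqrt lim_one_plus)
      then have l: "((\<lambda>i. sqrt (1 + (- (norm x)\<^sup>2) / i\<^sup>2) * (cmod (fourier \<phi> x))\<^sup>2 / 2) \<longlongrightarrow> sqrt 1 * (cmod (fourier \<phi> x))\<^sup>2 / 2) at_top"
        by (intro tendsto_mult tendsto_divide tendsto_const) auto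
      have "\<forall>\<^sub>F i in at_top. sqrt (1 + (- (norm x)\<^sup>2) / i\<^sup>2) * (cmod (fourier \<phi> x))\<^sup>2 / 2 = s i x"
        using eventually_ge_at_top[of "norm x"] by eventually_elim (simp add: s_def)
      from Lim_transform_eventually[OF l this] show "((\<lambda>i. s i x) \<longlongrightarrow> (cmod (fourier \<phi> x))\<^sup>2 / 2) at_top"
        by simp
    qed
    show "\<forall>\<^sub>F i in at_top. AE x in lborel. norm (s i x) \<le> (cmod (fourier \<phi> x))\<^sup>2 / 2"
      using eventually_gt_at_top[of "0::real"]
    proof eventually_elim
      case (elim i)
      show ?case
      proof (rule AE_I2)
        fix x :: 'a
        have "sqrt (1 + (- (norm x)\<^sup>2) / i\<^sup>2) \<le> 1" if "norm x \<le> i"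
        proof -
          have "1 + (- (norm x)\<^sup>2) / i\<^sup>2 \<le> 1" by (simp add: divide_nonneg_nonneg)
          then show ?thesis by simp
        qed
        moreover have "0 \<le> 1 + (- (norm x)\<^sup>2) / i\<^sup>2" if "norm x \<le> i"
        proof -
          have "(norm x)\<^sup>2 \<le> i\<^sup>2" using that by (intro power_mono) auto
          then have "(norm x)\<^sup>2 / i\<^sup>2 \<le> 1" using elim by (simp add: divide_le_eq)
          then show ?thesis by simp
        qed
        ultimately show "norm (s i x) \<le> (cmod (fourier \<phi> x))\<^sup>2 / 2"
          unfolding s_def by (auto intro!: mult_left_le_one_le simp: abs_mult)
      qed
    qed
  qed
  have ev: "\<forall>\<^sub>F k in at_top. integral\<^sup>L lborel (s k) = (\<integral>\<xi>. aK k \<phi> \<xi> \<partial>lborel) / k"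
    using eventually_gt_at_top[of "0::real"]
  proof eventually_elim
    case (elim k)
    have "(\<lambda>\<xi>. aK k \<phi> \<xi> / k) = s k"
      by (rule ext) (simp only: aK_div[OF elim] s_def)
    then have "integral\<^sup>L lborel (s k) = (\<integral>\<xi>. aK k \<phi> \<xi> / k \<partial>lborel)"
      by simp
    then show ?case by simp
  qed
  from Lim_transform_eventually[OF lim ev] show ?thesis by simp
qed

lemma smooth_cnj: "smooth_fun f \<Longrightarrow> smooth_fun (\<lambda>x. cnj (f x))"
proof (coinduction arbitrary: f rule: smooth_fun.coinduct)
  case (smooth_fun f)
  then have sf: "smooth_fun f" by simp
  have hd: "((\<lambda>x. cnj (f x)) has_derivative (\<lambda>v. cnj (frechet_derivative f (at x) v))) (at x)" for x
    using bounded_linear.has_derivative[OF bounded_linear_cnj frechet_derivative_works[THEN iffD1, OF smooth_diff[OF sf]]] .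
  have fd: "frechet_derivative (\<lambda>x. cnj (f x)) (at x) = (\<lambda>v. cnj (frechet_derivative f (at x) v))" for x
    using frechet_derivative_at[OF hd[of x]] by simp
  have "\<forall>x. (\<lambda>x. cnj (f x)) differentiable at x" using hd by (auto intro: differentiableI)
  moreover have "\<forall>i. i \<in> Basis \<longrightarrow> (\<exists>fa. (\<lambda>xa. frechet_derivative (\<lambda>x. cnj (f x)) (at xa) i) = (\<lambda>x. cnj (fa x)) \<and> smooth_fun fa)"
  proof (intro allI impI)
    fix i :: 'a assume i: "i \<in> Basis"
    show "\<exists>fa. (\<lambda>xa. frechet_derivative (\<lambda>x. cnj (f x)) (at xa) i) = (\<lambda>x. cnj (fa x)) \<and> smooth_fun fa"
      by (rule exI[of _ "Dd f i"]) (simp add: fd Dd_def smooth_Dd[OF sf i, unfolded Dd_def])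
  qed
  ultimately show ?case by blast
qed

lemma test_cnj:
  assumes "\<phi> \<in> test_fun G"
  shows "(\<lambda>x. cnj (\<phi> x)) \<in> test_fun G"
proof -
  have "tsupp (\<lambda>x. cnj (\<phi> x)) = tsupp \<phi>" unfolding tsupp_def by simp
  then show ?thesis using assms smooth_cnj unfolding test_fun_def by auto
qed

lemma fourier_cnj:
  "fourier (\<lambda>x. cnj (\<phi> x)) (- \<xi>) = cnj (fourier \<phi> \<xi>)"
proof -
  have "(\<lambda>x. cis (- (- \<xi> \<bullet> x)) * cnj (\<phi> x)) = (\<lambda>x. cnj (cis (- (\<xi> \<bullet> x)) * \<phi> x))"
    by (simp add: cis_cnj)
  note eq = this
  have ic: "(\<integral>x. cnj (cis (- (\<xi> \<bullet> x)) * \<phi> x) \<partial>lborel) = cnj (\<integral>x. cis (- (\<xi> \<bullet> x)) * \<phi> x \<partial>lborel)"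
    by (rule Bochner_Integration.integral_cnj)
  show ?thesis unfolding fourier_def eq ic by simp
qed

lemma Zsym_sq:
  assumes k: "k \<ge> 0"
  shows "(cmod (Zsym k \<xi>))\<^sup>2 \<le> k\<^sup>2 + (norm \<xi>)\<^sup>2"
proof (cases "norm \<xi> \<le> k")
  case True
  then have "(norm \<xi>)\<^sup>2 \<le> k\<^sup>2" by (intro power_mono) auto
  then show ?thesis using True by (simp add: Zsym_def)
next
  case False
  then have "k\<^sup>2 \<le> (norm \<xi>)\<^sup>2" using k by (intro power_mono) auto
  then show ?thesis using False by (simp add: Zsym_def norm_mult)
qed

lemma Im_V:
  "Im (Tk_ft k \<phi> \<xi> * cnj (fourier \<phi> \<xi>)) = aK k \<phi> \<xi>"
proof -
  have eq: "Tk_ft k \<phi> \<xi> * cnj (fourier \<phi> \<xi>) = (\<i> / 2) * Zsym k \<xi> * of_real ((cmod (fourier \<phi> \<xi>))\<^sup>2)"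
    unfolding Tk_ft_def using complex_norm_square[of "fourier \<phi> \<xi>"] by (simp only: mult.assoc)
  show ?thesis
    unfolding eq by (cases "norm \<xi> \<le> k") (simp_all add: Zsym_def aK_def)
qed

lemma Zsym_meas: "Zsym k \<in> borel_measurable lborel"
  unfolding Zsym_def by measurable

lemma V_meas:
  assumes phi: "\<phi> \<in> test_fun G"
  shows "Tk_ft k \<phi> \<in> borel_measurable lborel"
  unfolding Tk_ft_def using Zsym_meas fourier_meas[OF phi] by measurable


lemma V_sob:
  assumes phi: "\<phi> \<in> test_fun G" and k: "k \<ge> 1"
  shows "in_sob_ft k (s - 1) (Tk_ft k \<phi>)"
  unfolding in_sob_ft_def
proof
  show "Tk_ft k \<phi> \<in> borel_measurable lborel" by (rule V_meas[OF phi])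
  show "integrable lborel (\<lambda>\<xi>. sob_weight k (s - 1) \<xi> * (cmod (Tk_ft k \<phi> \<xi>))\<^sup>2)"
  proof (rule Bochner_Integration.integrable_bound)
    show "integrable lborel (\<lambda>\<xi>. sob_weight k s \<xi> * (cmod (fourier \<phi> \<xi>))\<^sup>2)"
      by (rule sob_integrable[OF phi k])
    show "(\<lambda>\<xi>. sob_weight k (s - 1) \<xi> * (cmod (Tk_ft k \<phi> \<xi>))\<^sup>2) \<in> borel_measurable lborel"
      using sob_weight_meas V_meas[OF phi] by measurable
    show "AE x in lborel. norm (sob_weight k (s - 1) x * (cmod (Tk_ft k \<phi> x))\<^sup>2)
          \<le> norm (sob_weight k s x * (cmod (fourier \<phi> x))\<^sup>2)"
    proof (rule AE_I2)
      fix x :: 'a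
      have kp: "k\<^sup>2 + (norm x)\<^sup>2 > 0" using k by (simp add: add_pos_nonneg)
      have w: "sob_weight k (s - 1) x * (k\<^sup>2 + (norm x)\<^sup>2) = sob_weight k s x"
        unfolding sob_weight_def using kp by (simp add: powr_diff)
      have w0: "sob_weight k (s - 1) x \<ge> 0" by (simp add: sob_weight_def)
      have nT: "cmod (Tk_ft k \<phi> x) = cmod (Zsym k x) * cmod (fourier \<phi> x) / 2"
        unfolding Tk_ft_def by (simp add: norm_mult)
      have "(cmod (Tk_ft k \<phi> x))\<^sup>2 = ((cmod (Zsym k x))\<^sup>2 * (cmod (fourier \<phi> x))\<^sup>2) / 4"
        unfolding nT by (simp add: power2_eq_square)
      also have "\<dots> \<le> (cmod (Zsym k x))\<^sup>2 * (cmod (fourier \<phi> x))\<^sup>2" by simp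
      also have "\<dots> \<le> (k\<^sup>2 + (norm x)\<^sup>2) * (cmod (fourier \<phi> x))\<^sup>2"
        by (rule mult_right_mono[OF Zsym_sq]) (use k in auto)
      finally have T2: "(cmod (Tk_ft k \<phi> x))\<^sup>2 \<le> (k\<^sup>2 + (norm x)\<^sup>2) * (cmod (fourier \<phi> x))\<^sup>2" .
      have "sob_weight k (s - 1) x * (cmod (Tk_ft k \<phi> x))\<^sup>2 \<le> sob_weight k (s - 1) x * ((k\<^sup>2 + (norm x)\<^sup>2) * (cmod (fourier \<phi> x))\<^sup>2)"
        by (rule mult_left_mono[OF T2 w0])
      also have "\<dots> = sob_weight k s x * (cmod (fourier \<phi> x))\<^sup>2"
        by (simp only: w mult.assoc[symmetric])
      finally have "sob_weight k (s - 1) x * (cmod (Tk_ft k \<phi> x))\<^sup>2 \<le> sob_weight k s x * (cmod (fourier \<phi> x))\<^sup>2" .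
      moreover have "sob_weight k s x \<ge> 0" by (simp add: sob_weight_def)
      ultimately show "norm (sob_weight k (s - 1) x * (cmod (Tk_ft k \<phi> x))\<^sup>2)
          \<le> norm (sob_weight k s x * (cmod (fourier \<phi> x))\<^sup>2)"
        using w0 by simp
    qed
  qed
qed

lemma sob_weight_pos: "k > 0 \<Longrightarrow> sob_weight k \<sigma> \<xi> > 0"
  unfolding sob_weight_def by (simp add: add_pos_nonneg)

lemma key_ineq:
  assumes phi: "\<phi> \<in> test_fun G" and k: "k \<ge> 1"
    and U: "in_sob_ft k (s - 1) U" and sr: "same_restr G U (Tk_ft k \<phi>)"
  shows "(\<integral>\<xi>. aK k \<phi> \<xi> \<partial>lborel)
     \<le> sob_norm_ft k (s - 1) U * sqrt (\<integral>\<xi>. sob_weight k (1 - s) \<xi> * (cmod (fourier \<phi> \<xi>))\<^sup>2 \<partial>lborel)"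
proof -
  define V where "V = Tk_ft k \<phi>"
  define a where "a = (\<lambda>\<xi>::'a. sob_weight k (s - 1) \<xi>)"
  define b where "b = (\<lambda>\<xi>::'a. sob_weight k (1 - s) \<xi>)"
  have k0: "k > 0" using k by simp
  have apos: "a \<xi> > 0" for \<xi> unfolding a_def by (rule sob_weight_pos[OF k0])
  have bpos: "b \<xi> > 0" for \<xi> unfolding b_def by (rule sob_weight_pos[OF k0])
  have ab: "a \<xi> * b \<xi> = 1" for \<xi>
  proof -
    have "k\<^sup>2 + (norm \<xi>)\<^sup>2 \<noteq> 0" using k0 by (simp add: add_nonneg_eq_0_iff)
    then show ?thesis unfolding a_def b_def sob_weight_def by (simp add: powr_add[symmetric])
  qed
  have Um: "U \<in> borel_measurable lborel" and Ui: "integrable lborel (\<lambda>\<xi>. a \<xi> * (cmod (U \<xi>))\<^sup>2)"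
    using U unfolding in_sob_ft_def a_def by auto
  have VS: "in_sob_ft k (s - 1) V" unfolding V_def by (rule V_sob[OF phi k])
  have Vm: "V \<in> borel_measurable lborel" and Vi: "integrable lborel (\<lambda>\<xi>. a \<xi> * (cmod (V \<xi>))\<^sup>2)"
    using VS unfolding in_sob_ft_def a_def by auto
  have Pm: "fourier \<phi> \<in> borel_measurable lborel" by (rule fourier_meas[OF phi])
  have Pi: "integrable lborel (\<lambda>\<xi>. b \<xi> * (cmod (fourier \<phi> \<xi>))\<^sup>2)"
    unfolding b_def by (rule sob_integrable[OF phi k])
  note csU = cauchy_schwarz_weighted[OF Um Pm Ui Pi apos bpos ab]
  note csV = cauchy_schwarz_weighted[OF Vm Pm Vi Pi apos bpos ab]
  have pair: "(\<integral>\<xi>. U \<xi> * cnj (fourier \<phi> \<xi>) \<partial>lborel) = (\<integral>\<xi>. V \<xi> * cnj (fourier \<phi> \<xi>) \<partial>lborel)"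
  proof -
    have "(\<lambda>x. cnj (\<phi> x)) \<in> test_fun G" by (rule test_cnj[OF phi])
    with sr have "(\<integral>\<xi>. U \<xi> * fourier (\<lambda>x. cnj (\<phi> x)) (- \<xi>) \<partial>lborel) = (\<integral>\<xi>. V \<xi> * fourier (\<lambda>x. cnj (\<phi> x)) (- \<xi>) \<partial>lborel)"
      unfolding same_restr_def V_def by blast
    then show ?thesis by (simp only: fourier_cnj)
  qed
  have "(\<integral>\<xi>. aK k \<phi> \<xi> \<partial>lborel) = (\<integral>\<xi>. Im (V \<xi> * cnj (fourier \<phi> \<xi>)) \<partial>lborel)"
    unfolding V_def by (simp only: Im_V)
  also have "\<dots> = Im (\<integral>\<xi>. V \<xi> * cnj (fourier \<phi> \<xi>) \<partial>lborel)"
    by (rule integral_Im[OF csV(1)])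
  also have "\<dots> = Im (\<integral>\<xi>. U \<xi> * cnj (fourier \<phi> \<xi>) \<partial>lborel)" by (simp only: pair)
  also have "\<dots> \<le> cmod (\<integral>\<xi>. U \<xi> * cnj (fourier \<phi> \<xi>) \<partial>lborel)" using abs_Im_le_cmod by (rule order_trans[OF abs_ge_self])
  also have "\<dots> \<le> sqrt (\<integral>\<xi>. a \<xi> * (cmod (U \<xi>))\<^sup>2 \<partial>lborel) * sqrt (\<integral>\<xi>. b \<xi> * (cmod (fourier \<phi> \<xi>))\<^sup>2 \<partial>lborel)"
    by (rule csU(2))
  finally show ?thesis unfolding sob_norm_ft_def a_def b_def .
qed

lemma sqrt_split:
  assumes k: "k > 0"
  shows "sqrt N = sqrt (N / k powr (2 * \<sigma>)) * k powr \<sigma>"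
proof -
  have "k powr (2 * \<sigma>) = k powr (\<sigma> + \<sigma>)" by simp
  also have "\<dots> = k powr \<sigma> * k powr \<sigma>" by (rule powr_add)
  finally have kp: "k powr (2 * \<sigma>) = (k powr \<sigma>)\<^sup>2" by (simp add: power2_eq_square)
  have pos: "k powr \<sigma> > 0" using k by simp
  have "N = N / k powr (2 * \<sigma>) * (k powr \<sigma>)\<^sup>2" using pos by (simp add: kp)
  then have "sqrt N = sqrt (N / k powr (2 * \<sigma>) * (k powr \<sigma>)\<^sup>2)" by simp
  also have "\<dots> = sqrt (N / k powr (2 * \<sigma>)) * k powr \<sigma>"
    using pos by (simp only: real_sqrt_mult real_sqrt_abs abs_of_pos)
  finally show ?thesis .
qed

lemma restr_nonempty:
  assumes phi: "\<phi> \<in> test_fun G" and k: "k \<ge> 1"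
  shows "{sob_norm_ft k (s - 1) U | U. in_sob_ft k (s - 1) U \<and> same_restr G U (Tk_ft k \<phi>)} \<noteq> {}"
proof -
  have "same_restr G (Tk_ft k \<phi>) (Tk_ft k \<phi>)" unfolding same_restr_def by simp
  then show ?thesis using V_sob[OF phi k] by blast
qed


theorem mainTheorem11:
  fixes G :: "'a::euclidean_space set" and \<phi> :: "'a \<Rightarrow> complex" and s C :: real
  assumes dim: "DIM('a) = 1 \<or> DIM('a) = 2"
    and G_open: "open G" and G_bdd: "bounded G" and G_ne: "G \<noteq> {}"
    and phi_test: "\<phi> \<in> test_fun G" and phi_nz: "\<phi> \<noteq> (\<lambda>x. 0)"
    and C_lt: "C < 1 / (2 * sqrt 2)"
  shows "\<exists>k0>0. \<forall>k\<ge>k0.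
           sob_norm_restr k (s - 1) G (Tk_ft k \<phi>) \<ge> C * sob_norm_ft k s (fourier \<phi>)"
proof -
  note phi = phi_test
  define M where "M = (\<integral>\<xi>. (cmod (fourier \<phi> \<xi>))\<^sup>2 \<partial>lborel)"
  define N where "N k \<sigma> = (\<integral>\<xi>. sob_weight k \<sigma> \<xi> * (cmod (fourier \<phi> \<xi>))\<^sup>2 \<partial>lborel)" for k \<sigma>
  define S where "S k = {sob_norm_ft k (s - 1) U | U. in_sob_ft k (s - 1) U \<and> same_restr G U (Tk_ft k \<phi>)}" for k
  have M0: "M \<ge> 0" unfolding M_def by (intro integral_nonneg_AE) auto
  have S_nonneg: "x \<in> S k \<Longrightarrow> 0 \<le> x" for x k unfolding S_def sob_norm_ft_def by (auto intro!: integral_nonneg_AE simp: sob_weight_def)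
  have restr_eq: "sob_norm_restr k (s - 1) G (Tk_ft k \<phi>) = Inf (S k)" for k
    unfolding sob_norm_restr_def S_def ..
  show ?thesis
  proof (cases "M = 0")
    case True
    have "AE \<xi> in lborel. (cmod (fourier \<phi> \<xi>))\<^sup>2 = 0"
      using True Phi2_integrable[OF phi] unfolding M_def
      by (subst (asm) integral_nonneg_eq_0_iff_AE) auto
    then have "AE \<xi> in lborel. sob_weight k s \<xi> * (cmod (fourier \<phi> \<xi>))\<^sup>2 = 0" for k
      by eventually_elim simp
    then have Nz: "sob_norm_ft k s (fourier \<phi>) = 0" for k
      unfolding sob_norm_ft_def by (simp add: integral_eq_zero_AE)
    have "sob_norm_restr k (s - 1) G (Tk_ft k \<phi>) \<ge> C * sob_norm_ft k s (fourier \<phi>)" if k: "k \<ge> 1" for k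
    proof -
      have "0 \<le> Inf (S k)"
        using restr_nonempty[OF phi k, of s] S_nonneg unfolding S_def[symmetric]
        by (intro cInf_greatest) auto
      then show ?thesis using Nz restr_eq by simp
    qed
    then show ?thesis by (intro exI[of _ 1]) auto
  next
    case False
    then have Mpos: "M > 0" using M0 by simp
    define f1 where "f1 k = N k s / k powr (2 * s)" for k
    define f2 where "f2 k = N k (1 - s) / k powr (2 * (1 - s))" for k
    define g where "g k = (\<integral>\<xi>. aK k \<phi> \<xi> \<partial>lborel) / k" for k
    have l1: "(f1 \<longlongrightarrow> M) at_top" unfolding f1_def N_def M_def by (rule lim_N[OF phi])
    have l2: "(f2 \<longlongrightarrow> M) at_top" unfolding f2_def N_def M_def by (rule lim_N[OF phi])
    have l3: "(g \<longlongrightarrow> M / 2) at_top" unfolding g_def M_def by (rule lim_A[OF phi])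
    have lh: "((\<lambda>k. g k - C * (sqrt (f1 k) * sqrt (f2 k))) \<longlongrightarrow> M / 2 - C * (sqrt M * sqrt M)) at_top"
      by (rule tendsto_diff[OF l3 tendsto_mult[OF tendsto_const tendsto_mult[OF tendsto_real_sqrt[OF l1] tendsto_real_sqrt[OF l2]]]])
    have C2: "C < 1 / 2"
    proof -
      have "1 < sqrt 2" by simp
      then have "1 / (2 * sqrt 2) < 1 / 2" by (simp add: field_simps)
      then show ?thesis using C_lt by linarith
    qed
    have "0 < M / 2 - C * (sqrt M * sqrt M)"
    proof -
      have "sqrt M * sqrt M = M" using M0 by simp
      then have "M / 2 - C * (sqrt M * sqrt M) = M * (1 / 2 - C)" by (simp add: algebra_simps)
      moreover have "0 < M * (1 / 2 - C)" using Mpos C2 by simp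
      ultimately show ?thesis by simp
    qed
    then have ev1: "\<forall>\<^sub>F k in at_top. 0 < g k - C * (sqrt (f1 k) * sqrt (f2 k))"
      using lh order_tendstoD(1) by blast
    have ev2: "\<forall>\<^sub>F k in at_top. 0 < f2 k"
      using l2 Mpos order_tendstoD(1) by blast
    have "\<forall>\<^sub>F k in at_top. 1 \<le> k \<and> 0 < g k - C * (sqrt (f1 k) * sqrt (f2 k)) \<and> 0 < f2 k"
      using eventually_ge_at_top[of "1::real"] ev1 ev2 by eventually_elim auto
    then obtain K where K: "\<And>k. k \<ge> K \<Longrightarrow> 1 \<le> k \<and> 0 < g k - C * (sqrt (f1 k) * sqrt (f2 k)) \<and> 0 < f2 k"
      by (auto simp: eventually_at_top_linorder)
    have main: "sob_norm_restr k (s - 1) G (Tk_ft k \<phi>) \<ge> C * sob_norm_ft k s (fourier \<phi>)"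
      if kK: "k \<ge> max K 1" for k
    proof -
      have k1: "k \<ge> 1" and hk: "0 < g k - C * (sqrt (f1 k) * sqrt (f2 k))" and f2p: "0 < f2 k"
        using K[of k] kK by auto
      have k0: "k > 0" using k1 by simp
      have sq1: "sqrt (N k s) = sqrt (f1 k) * k powr s"
        unfolding f1_def by (rule sqrt_split[OF k0])
      have sq2: "sqrt (N k (1 - s)) = sqrt (f2 k) * k powr (1 - s)"
        unfolding f2_def by (rule sqrt_split[OF k0])
      have kk: "k powr s * k powr (1 - s) = k"
        using k0 by (simp add: powr_add[symmetric])
      have N2pos: "sqrt (N k (1 - s)) > 0" using sq2 f2p k0 by simp
      have A_eq: "(\<integral>\<xi>. aK k \<phi> \<xi> \<partial>lborel) = k * g k" unfolding g_def using k0 by simp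
      have "C * sqrt (N k s) * sqrt (N k (1 - s)) = (C * (sqrt (f1 k) * sqrt (f2 k))) * (k powr s * k powr (1 - s))"
        unfolding sq1 sq2 by (simp only: mult_ac)
      also have "\<dots> = k * (C * (sqrt (f1 k) * sqrt (f2 k)))" by (simp only: kk mult.commute)
      also have "\<dots> < k * g k" using hk k0 by (simp add: mult_strict_left_mono)
      finally have lt: "C * sqrt (N k s) * sqrt (N k (1 - s)) < (\<integral>\<xi>. aK k \<phi> \<xi> \<partial>lborel)"
        using A_eq by simp
      have "C * sob_norm_ft k s (fourier \<phi>) \<le> Inf (S k)"
      proof (rule cInf_greatest)
        show "S k \<noteq> {}" unfolding S_def by (rule restr_nonempty[OF phi k1])
        fix x assume "x \<in> S k"
        then obtain U where x: "x = sob_norm_ft k (s - 1) U" and U: "in_sob_ft k (s - 1) U"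
          and sr: "same_restr G U (Tk_ft k \<phi>)" unfolding S_def by blast
        have "(\<integral>\<xi>. aK k \<phi> \<xi> \<partial>lborel) \<le> x * sqrt (N k (1 - s))"
          unfolding x N_def by (rule key_ineq[OF phi k1 U sr])
        with lt have "C * sqrt (N k s) * sqrt (N k (1 - s)) < x * sqrt (N k (1 - s))" by simp
        then have "C * sqrt (N k s) < x" using N2pos by simp
        then show "C * sob_norm_ft k s (fourier \<phi>) \<le> x"
          unfolding sob_norm_ft_def N_def by simp
      qed
      then show ?thesis using restr_eq by simp
    qed
    show ?thesis
      by (rule exI[of _ "max K 1"]) (use main in auto)
  qed
qed

end
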